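(* Consider the Single TFM with split parameter $z\in(0,1)$, all transactions of common size $s>0$, history $H$ with burning fee $r$, and a set $M_0$ of user transactions with $|M_0|=w>c_{block}$. Suppose all includers and the block producer follow the indicated allocation rules and add no fake transactions, producing block $B_k$. Then for every $t\in M_0\setminus B_k$ there is a bid $c'_t$ for $t$ such that, with all other transactions and bids unchanged and all parties following the indicated allocation rules without fake transactions, $t$ is included in at least one inclusion list and in the block.
   Context: Model: in one slot there are users, $m$ includers with distinct orders $1,\dots,m$ (order $1$ best), and one block producer. Each transaction has size $s$. Includers choose inclusion lists (at most $c_{Incl}$ transactions each); the block producer, seeing them, builds a block (at most $c_{block}$ transactions). Each transaction in the block pays burning fee $rs$. Block producer cost $\mu^{Cost}_{BP}\ge0$ and includer cost $\mu^{Cost}_{CM}\ge0$ per unit of size per included user transaction. Single TFM: the bid is a single nonnegative number $c_t$. Block producer fee $=\max\{\min\{\mu^{Cost}_{BP}s,\ c_ts-rs\}+\max\{c_ts-rs-\mu^{Cost}_{BP}s,0\}(1-z),\ 0\}$, paid when $t$ is in the block. Committee fee $=\max\{c_ts-rs-\mu^{Cost}_{BP}s,0\}\cdot z$, paid to the smallest-order includer listing $t$, only if $t$ is in the block. Indicated allocation rules. Block producer: among transactions with $c_t\ge r+\mu^{Cost}_{BP}$, include those with highest block producer fee (deterministic tie-breaking) until full. Includer of order $j$: compute the set $S$ the block producer would include; discard those with committee fee below $\mu^{Cost}_{CM}s$; sort the rest by committee fee decreasingly (deterministic tie-breaking); includer $j$ takes positions $(j-1)c_{Incl}+1,\dots,jc_{Incl}$.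 *)

theory Defs
  imports Complex_Main
begin

text \<open>Single TFM. Bids are one nonnegative real per transaction (c t).
  Fees are per transaction of size s, burning fee r, split parameter z.\<close>

definition bp_fee :: "real \<Rightarrow> real \<Rightarrow> real \<Rightarrow> real \<Rightarrow> real \<Rightarrow> real" where
  "bp_fee z muBP r s ct =
     max (min (muBP * s) (ct * s - r * s) + max (ct * s - r * s - muBP * s) 0 * (1 - z)) 0"

definition cm_fee :: "real \<Rightarrow> real \<Rightarrow> real \<Rightarrow> real \<Rightarrow> real \<Rightarrow> real" where
  "cm_fee z muBP r s ct = max (ct * s - r * s - muBP * s) 0 * z"

definition beats :: "('a \<Rightarrow> real) \<Rightarrow> ('a \<Rightarrow> nat) \<Rightarrow> 'a \<Rightarrow> 'a \<Rightarrow> bool" where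
  "beats key tb u t \<longleftrightarrow> key u > key t \<or> (key u = key t \<and> tb u < tb t)"

text \<open>Number of elements of A ranked strictly before t (so t is at position rank+1).\<close>
definition rank :: "'a set \<Rightarrow> ('a \<Rightarrow> real) \<Rightarrow> ('a \<Rightarrow> nat) \<Rightarrow> 'a \<Rightarrow> nat" where
  "rank A key tb t = card {u \<in> A. beats key tb u t}"

definition bp_block ::
  "real \<Rightarrow> real \<Rightarrow> real \<Rightarrow> real \<Rightarrow> nat \<Rightarrow> ('a \<Rightarrow> nat) \<Rightarrow> 'a set \<Rightarrow> ('a \<Rightarrow> real) \<Rightarrow> 'a set" where
  "bp_block z muBP r s cBlock tbBP M c =
     (let E = {t \<in> M. c t \<ge> r + muBP}
      in {t \<in> E. rank E (\<lambda>u. bp_fee z muBP r s (c u)) tbBP t < cBlock})"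

text \<open>Indicated rule for the includer of order j (1 \<le> j \<le> m): compute the block
  producer's set S, keep those with committee fee \<ge> muCM * s, sort by committee fee
  decreasingly and take positions (j-1)*cIncl+1, ..., j*cIncl.\<close>
definition incl_list ::
  "real \<Rightarrow> real \<Rightarrow> real \<Rightarrow> real \<Rightarrow> real \<Rightarrow> nat \<Rightarrow> nat \<Rightarrow> ('a \<Rightarrow> nat) \<Rightarrow> ('a \<Rightarrow> nat)
     \<Rightarrow> 'a set \<Rightarrow> ('a \<Rightarrow> real) \<Rightarrow> nat \<Rightarrow> 'a set" where
  "incl_list z muBP muCM r s cBlock cIncl tbBP tbCM M c j =
     (let S = bp_block z muBP r s cBlock tbBP M c;
          S' = {t \<in> S. cm_fee z muBP r s (c t) \<ge> muCM * s};
          key = (\<lambda>u. cm_fee z muBP r s (c u))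
      in {t \<in> S'. (j - 1) * cIncl \<le> rank S' key tbCM t \<and> rank S' key tbCM t < j * cIncl})"

end

theory Submission
  imports Defs
begin

lemma aux_f:
  fixes A B m w :: real
  assumes "0 < w" "0 \<le> m" "A < B" "m < B"
  shows "max (min m A + max (A - m) 0 * w) 0 < max (min m B + max (B - m) 0 * w) 0"
proof -
  have fB: "min m B + max (B - m) 0 * w = m + (B - m) * w" using assms by simp
  have pB: "(B - m) * w > 0" using assms by simp
  show ?thesis
  proof (cases "A \<le> m")
    case True
    hence "min m A + max (A - m) 0 * w = A" by simp
    moreover have "A < m + (B-m)*w" "0 < m+(B-m)*w" using pB True assms by linarith+
    ultimately show ?thesis using fB by (simp add: max_def)
  next
    case False
    hence "min m A + max (A - m) 0 * w = m + (A - m) * w" by simp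
    moreover have "(A - m) * w < (B - m) * w" using assms by (simp add: mult_strict_right_mono)
    moreover have "(A - m) * w > 0" using False assms by simp
    ultimately show ?thesis using fB pB assms by simp
  qed
qed

lemma bp_mono:
  assumes "0 < z" "z < 1" "0 < s" "0 \<le> muBP" "x < y" "y > r + muBP"
  shows "bp_fee z muBP r s x < bp_fee z muBP r s y"
proof -
  have e1: "x * s - r * s - muBP * s = (x * s - r * s) - muBP * s" by simp
  have "x * s - r * s < y * s - r * s" using assms by simp
  moreover have "muBP * s < y * s - r * s"
  proof -
    have "muBP * s < (y - r) * s" using assms by (intro mult_strict_right_mono) auto
    thus ?thesis by (simp add: algebra_simps)
  qed
  moreover have "0 \<le> muBP * s" using assms by simp
  ultimately show ?thesis unfolding bp_fee_def
    using aux_f[of "1 - z" "muBP * s" "x * s - r * s" "y * s - r * s"] assms(2)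
    by (simp add: algebra_simps)
qed

lemma cm_mono:
  assumes "0 < z" "0 < s" "x < y" "y > r + muBP"
  shows "cm_fee z muBP r s x < cm_fee z muBP r s y"
proof -
  have a: "(y - x) * s > 0" using assms by simp
  have b: "(y - r - muBP) * s > 0" using assms by simp
  have c: "(y - x) * s * z > 0" "(y - r - muBP) * s * z > 0" using a b assms by simp_all
  show ?thesis unfolding cm_fee_def using a b c
    by (auto simp: max_def algebra_simps)
qed

theorem mainTheorem4:
  fixes z muBP muCM r s :: real
    and m cBlock cIncl :: nat
    and tbBP tbCM :: "'a \<Rightarrow> nat"
    and M0 :: "'a set"
    and c :: "'a \<Rightarrow> real"
  assumes "0 < z" and "z < 1" and "0 < s" and "0 \<le> r"
    and "0 \<le> muBP" and "0 \<le> muCM"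
    and "1 \<le> m" and "1 \<le> cBlock" and "1 \<le> cIncl"
    and "inj_on tbBP M0" and "inj_on tbCM M0"
    and "finite M0" and "card M0 > cBlock"
    and "\<forall>u\<in>M0. 0 \<le> c u"
    and "t \<in> M0 - bp_block z muBP r s cBlock tbBP M0 c"
  shows "\<exists>c't. 0 \<le> c't \<and>
           (\<exists>j\<in>{1..m}. t \<in> incl_list z muBP muCM r s cBlock cIncl tbBP tbCM M0 (c(t := c't)) j) \<and>
           t \<in> bp_block z muBP r s cBlock tbBP M0 (c(t := c't))"
proof -
  define K where "K = Max (c ` M0)"
  have tM: "t \<in> M0" using assms(15) by simp
  have Kge: "\<And>u. u \<in> M0 \<Longrightarrow> c u \<le> K" unfolding K_def using assms(12) by simp
  have K0: "0 \<le> K" using Kge[OF tM] assms(14) tM by force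
  define y where "y = K + r + muBP + muCM / z + 1"
  define c' where "c' = c(t := y)"
  have y0: "0 \<le> y" unfolding y_def using K0 assms(4,5,6,1) by simp
  have "0 \<le> muCM / z" using assms(6,1) by simp
  hence yr: "y > r + muBP" unfolding y_def using K0 by simp
  have lt: "\<And>u. u \<in> M0 \<Longrightarrow> u \<noteq> t \<Longrightarrow> c' u < y"
    unfolding c'_def y_def using Kge K0 assms(4,5) \<open>0 \<le> muCM / z\<close> by fastforce
  have bpl: "\<And>u. u \<in> M0 \<Longrightarrow> \<not> beats (\<lambda>u. bp_fee z muBP r s (c' u)) tbBP u t"
  proof -
    fix u assume u: "u \<in> M0"
    show "\<not> beats (\<lambda>u. bp_fee z muBP r s (c' u)) tbBP u t"
    proof (cases "u = t")
      case True thus ?thesis by (simp add: beats_def)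
    next
      case False
      have "bp_fee z muBP r s (c' u) < bp_fee z muBP r s y"
        using bp_mono[OF assms(1,2,3,5) lt[OF u False] yr] .
      thus ?thesis by (simp add: beats_def c'_def)
    qed
  qed
  have cml: "\<And>u. u \<in> M0 \<Longrightarrow> \<not> beats (\<lambda>u. cm_fee z muBP r s (c' u)) tbCM u t"
  proof -
    fix u assume u: "u \<in> M0"
    show "\<not> beats (\<lambda>u. cm_fee z muBP r s (c' u)) tbCM u t"
    proof (cases "u = t")
      case True thus ?thesis by (simp add: beats_def)
    next
      case False
      have "cm_fee z muBP r s (c' u) < cm_fee z muBP r s y"
        using cm_mono[OF assms(1,3) lt[OF u False] yr] .
      thus ?thesis by (simp add: beats_def c'_def)
    qed
  qed
  have emp: "\<And>E. E \<subseteq> M0 \<Longrightarrow> {u \<in> E. beats (\<lambda>u. bp_fee z muBP r s (c' u)) tbBP u t} = {}"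
    using bpl by blast
  have tB: "t \<in> bp_block z muBP r s cBlock tbBP M0 c'"
    unfolding bp_block_def Let_def rank_def
  proof -
    let ?E = "{t \<in> M0. r + muBP \<le> c' t}"
    have h: "{u \<in> ?E. beats (\<lambda>u. bp_fee z muBP r s (c' u)) tbBP u t} = {}" by (rule emp) auto
    have "card {u \<in> ?E. beats (\<lambda>u. bp_fee z muBP r s (c' u)) tbBP u t} < cBlock"
      unfolding h using assms(8) by simp
    moreover have "t \<in> ?E" using tM yr by (simp add: c'_def)
    ultimately show "t \<in> {t \<in> ?E. card {u \<in> ?E. beats (\<lambda>u. bp_fee z muBP r s (c' u)) tbBP u t} < cBlock}"
      by blast
  qed
  have cmt: "cm_fee z muBP r s (c' t) \<ge> muCM * s"
  proof -
    have "y - r - muBP \<ge> muCM / z" unfolding y_def using K0 by simp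
    hence "(y - r - muBP) * z \<ge> muCM" using assms(1) by (simp add: field_simps)
    hence "(y - r - muBP) * z * s \<ge> muCM * s" using assms(3) by simp
    moreover have "(y * s - r * s - muBP * s) = (y - r - muBP) * s" by (simp add: algebra_simps)
    moreover have "(y - r - muBP) * s > 0" using yr assms(3) by simp
    ultimately have "cm_fee z muBP r s y = (y - r - muBP) * s * z"
      unfolding cm_fee_def by simp
    thus ?thesis using \<open>(y - r - muBP) * z * s \<ge> muCM * s\<close> by (simp add: c'_def algebra_simps)
  qed
  have bsub: "bp_block z muBP r s cBlock tbBP M0 c' \<subseteq> M0" unfolding bp_block_def Let_def by auto
  have tI: "t \<in> incl_list z muBP muCM r s cBlock cIncl tbBP tbCM M0 c' 1"
  proof -
    let ?S = "{t \<in> bp_block z muBP r s cBlock tbBP M0 c'. cm_fee z muBP r s (c' t) \<ge> muCM * s}"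
    have h: "{u \<in> ?S. beats (\<lambda>u. cm_fee z muBP r s (c' u)) tbCM u t} = {}"
      using cml bsub by blast
    have "card {u \<in> ?S. beats (\<lambda>u. cm_fee z muBP r s (c' u)) tbCM u t} < cIncl"
      unfolding h using assms(9) by simp
    moreover have "t \<in> ?S" using tB cmt by simp
    ultimately show ?thesis unfolding incl_list_def Let_def rank_def by simp
  qed
  show ?thesis
    apply (rule exI[of _ y])
    using y0 tI tB assms(7) unfolding c'_def by auto
qed

end
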